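(* Let $(X_t)_{t\ge1}$ be i.i.d. random variables in $[0,1]$ with variance $\sigma^2>0$, fix $\alpha\in(0,1)$, and define $\widehat\mu_t$, $\widehat\sigma_t^2$ and $\lambda_t$ as follows: $\widehat\mu_0=1/2$ and $\widehat\sigma_0^2=1/4$, and for $t\ge1$, $\widehat\mu_t=(1/2+\sum_{i\le t}X_i)/(t+1)$, $\widehat\sigma_t^2=(1/4+\sum_{i\le t}(X_i-\widehat\mu_i)^2)/(t+1)$ and $\lambda_t=\sqrt{2\log(2/\alpha)/(\widehat\sigma_{t-1}^2\,t\log(1+t))}\wedge\frac12$. Then, almost surely, \[ \sum_{i\le t}(X_i-\widehat\mu_{i-1})^2\,\psi_E(\lambda_i)\sim\log(2/\alpha)\,\log\log t . \]
   Context: $\psi_E(x)=-\log(1-x)-x$ for $x\in[0,1)$. $f(t)\sim g(t)$ means $f(t)/g(t)\to1$ as $t\to\infty$. *)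

theory Defs
  imports "HOL-Probability.Probability" "HOL-Library.Landau_Symbols"
begin

definition psiE :: "real \<Rightarrow> real" where
  "psiE x = - ln (1 - x) - x"

definition mu_hat :: "(nat \<Rightarrow> 'a \<Rightarrow> real) \<Rightarrow> nat \<Rightarrow> 'a \<Rightarrow> real" where
  "mu_hat X t \<omega> = (1/2 + (\<Sum>i=1..t. X i \<omega>)) / (real t + 1)"

definition sigma2_hat :: "(nat \<Rightarrow> 'a \<Rightarrow> real) \<Rightarrow> nat \<Rightarrow> 'a \<Rightarrow> real" where
  "sigma2_hat X t \<omega> = (1/4 + (\<Sum>i=1..t. (X i \<omega> - mu_hat X i \<omega>)^2)) / (real t + 1)"

definition lam :: "real \<Rightarrow> (nat \<Rightarrow> 'a \<Rightarrow> real) \<Rightarrow> nat \<Rightarrow> 'a \<Rightarrow> real" where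
  "lam \<alpha> X t \<omega> = min (sqrt (2 * ln (2 / \<alpha>) /
      (sigma2_hat X (t - 1) \<omega> * real t * ln (1 + real t)))) (1/2)"

end

theory Submission
  imports Defs "HOL-Real_Asymp.Real_Asymp"
begin

lemma weighted_null:
  fixes v b W :: "nat \<Rightarrow> real"
  assumes v: "\<And>i. v i \<ge> 0" and b: "b \<longlonglongrightarrow> 0" and W: "filterlim W at_top sequentially"
    and le: "\<And>t. (\<Sum>i=1..t. v i) \<le> W t"
  shows "(\<lambda>t. (\<Sum>i=1..t. v i * b i) / W t) \<longlonglongrightarrow> 0"
proof (rule tendstoI)
  fix e :: real assume e: "e > 0"
  then have "e/2 > 0" by simp
  from b[unfolded LIMSEQ_iff, rule_format, OF this] obtain N where N: "\<And>i. i \<ge> N \<Longrightarrow> \<bar>b i\<bar> < e/2"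
    by auto
  define K where "K = (\<Sum>i<N. v i * \<bar>b i\<bar>)"
  have K0: "K \<ge> 0" unfolding K_def using v by (intro sum_nonneg) auto
  have bound: "\<bar>\<Sum>i=1..t. v i * b i\<bar> \<le> e/2 * W t + K" for t
  proof -
    have "\<bar>\<Sum>i=1..t. v i * b i\<bar> \<le> (\<Sum>i=1..t. v i * \<bar>b i\<bar>)"
      by (rule order_trans[OF sum_abs]) (simp add: abs_mult v)
    also have "\<dots> \<le> (\<Sum>i=1..t. (e/2 * v i + (if i < N then v i * \<bar>b i\<bar> else 0)))"
    proof (rule sum_mono)
      fix i assume "i \<in> {1..t}"
      show "v i * \<bar>b i\<bar> \<le> e/2 * v i + (if i < N then v i * \<bar>b i\<bar> else 0)"
      proof (cases "i < N")
        case True then show ?thesis using v[of i] e by simp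
      next
        case False
        then have "\<bar>b i\<bar> \<le> e/2" using N[of i] by simp
        then have "v i * \<bar>b i\<bar> \<le> v i * (e/2)" by (rule mult_left_mono) (rule v)
        then show ?thesis using False by (simp add: mult.commute)
      qed
    qed
    also have "\<dots> = e/2 * (\<Sum>i=1..t. v i) + (\<Sum>i=1..t. (if i < N then v i * \<bar>b i\<bar> else 0))"
      by (simp add: sum.distrib sum_distrib_left)
    also have "(\<Sum>i=1..t. (if i < N then v i * \<bar>b i\<bar> else 0)) \<le> K"
    proof -
      have "(\<Sum>i=1..t. (if i < N then v i * \<bar>b i\<bar> else 0)) = (\<Sum>i\<in>{1..t} \<inter> {..<N}. v i * \<bar>b i\<bar>)"
        by (simp add: sum.inter_restrict)
      also have "\<dots> \<le> K" unfolding K_def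
        by (rule sum_mono2) (use v in auto)
      finally show ?thesis .
    qed
    also have "e/2 * (\<Sum>i=1..t. v i) \<le> e/2 * W t"
      using le[of t] e by simp
    finally show ?thesis by simp
  qed
  have ev: "eventually (\<lambda>t. W t \<ge> 4 * K / e + 1) sequentially"
    using W by (simp add: filterlim_at_top)
  show "eventually (\<lambda>t. dist ((\<Sum>i=1..t. v i * b i) / W t) 0 < e) sequentially"
  proof (rule eventually_mono[OF ev])
    fix t assume Wt: "W t \<ge> 4 * K / e + 1"
    have Wp: "W t > 0" using Wt K0 e by (smt (verit) divide_nonneg_pos)
    have "4 * K < e * W t" using Wt e K0
      by (smt (verit, ccfv_SIG) mult_less_cancel_left_pos nonzero_mult_div_cancel_left times_divide_eq_right)
    then have "e/2 * W t + K < e * W t" using e Wp K0 by linarith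
    then have "\<bar>\<Sum>i=1..t. v i * b i\<bar> < e * W t" using bound[of t] by simp
    then show "dist ((\<Sum>i=1..t. v i * b i) / W t) 0 < e"
      using Wp by (simp add: abs_divide pos_divide_less_eq)
  qed
qed

lemma abel_identity:
  fixes w d :: "nat \<Rightarrow> real"
  shows "(\<Sum>i=1..t. w i * d i) = w (Suc t) * (\<Sum>j=1..t. d j) + (\<Sum>i=1..t. (w i - w (Suc i)) * (\<Sum>j=1..i. d j))"
proof (induction t)
  case 0 then show ?case by simp
next
  case (Suc t)
  have "(\<Sum>i=1..Suc t. w i * d i) = (\<Sum>i=1..t. w i * d i) + w (Suc t) * d (Suc t)" by simp
  also have "\<dots> = w (Suc t) * (\<Sum>j=1..t. d j) + (\<Sum>i=1..t. (w i - w (Suc i)) * (\<Sum>j=1..i. d j)) + w (Suc t) * d (Suc t)"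
    using Suc by simp
  also have "\<dots> = w (Suc (Suc t)) * (\<Sum>j=1..Suc t. d j) + (\<Sum>i=1..Suc t. (w i - w (Suc i)) * (\<Sum>j=1..i. d j))"
    by (simp add: algebra_simps)
  finally show ?case .
qed

lemma telescope_weights:
  fixes w :: "nat \<Rightarrow> real"
  shows "(\<Sum>i=1..t. (w i - w (Suc i)) * real i) = (\<Sum>i=1..t. w i) - real t * w (Suc t)"
  by (induction t) (simp_all add: algebra_simps)

lemma weighted_avg:
  fixes w d W :: "nat \<Rightarrow> real"
  assumes w0: "\<And>i. w i \<ge> 0" and wdec: "\<And>i. i \<ge> 1 \<Longrightarrow> w (Suc i) \<le> w i"
    and avg: "(\<lambda>t. (\<Sum>j=1..t. d j) / real t) \<longlonglongrightarrow> 0"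
    and tw: "(\<lambda>t. real t * w (Suc t)) \<longlonglongrightarrow> 0"
    and W: "filterlim W at_top sequentially"
    and Wdef: "\<And>t. W t = (\<Sum>i=1..t. w i)"
  shows "(\<lambda>t. (\<Sum>i=1..t. w i * d i) / W t) \<longlonglongrightarrow> 0"
proof -
  define v where "v i = (w i - w (Suc i)) * real i" for i
  define b where "b i = (\<Sum>j=1..i. d j) / real i" for i
  have eq: "(\<Sum>i=1..t. w i * d i) / W t =
     (real t * w (Suc t)) * b t / W t + (\<Sum>i=1..t. v i * b i) / W t" for t
  proof -
    have s1: "(\<Sum>i=1..t. (w i - w (Suc i)) * (\<Sum>j=1..i. d j)) = (\<Sum>i=1..t. v i * b i)"
      by (rule sum.cong) (auto simp: v_def b_def)
    have s2: "w (Suc t) * (\<Sum>j=1..t. d j) = (real t * w (Suc t)) * b t"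
      by (cases "t = 0") (auto simp: b_def)
    have A: "(\<Sum>i=1..t. w i * d i) = (real t * w (Suc t)) * b t + (\<Sum>i=1..t. v i * b i)"
      by (subst abel_identity, simp only: s1 s2)
    show ?thesis unfolding A add_divide_distrib by (rule refl)
  qed
  have W': "filterlim W at_infinity sequentially"
    using W filterlim_at_top_imp_at_infinity by blast
  have 1: "(\<lambda>t. (real t * w (Suc t)) * b t / W t) \<longlonglongrightarrow> 0"
    by (rule tendsto_divide_0[OF _ W']) (use tendsto_mult[OF tw avg] in \<open>simp add: b_def\<close>)
  have 2: "(\<lambda>t. (\<Sum>i=1..t. v i * b i) / W t) \<longlonglongrightarrow> 0"
  proof (rule weighted_null[OF _ avg[folded b_def] W])
    show "0 \<le> v i" for i using wdec[of i] by (cases "i = 0") (simp_all add: v_def)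
    show "(\<Sum>i=1..t. v i) \<le> W t" for t
      using telescope_weights[of w t] w0[of "Suc t"] by (simp add: v_def Wdef)
  qed
  show ?thesis unfolding eq using tendsto_add[OF 1 2] by simp
qed

lemma ln_diff_bounds:
  fixes x y :: real
  assumes "0 < x" "x < y"
  shows "(y - x) / y \<le> ln y - ln x" "ln y - ln x \<le> (y - x) / x"
proof -
  have "ln (y / x) \<le> y / x - 1" using assms by (intro ln_le_minus_one) simp
  then show "ln y - ln x \<le> (y - x) / x" using assms by (simp add: ln_div diff_divide_distrib)
  have "ln (x / y) \<le> x / y - 1" using assms by (intro ln_le_minus_one) simp
  then show "(y - x) / y \<le> ln y - ln x" using assms by (simp add: ln_div diff_divide_distrib)
qed

lemma lnln_step:
  fixes i :: real
  assumes i: "i \<ge> 2"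
  shows "1 / ((i+1) * ln (i+1)) \<le> ln (ln (i+1)) - ln (ln i)"
    and "ln (ln (i+1)) - ln (ln i) \<le> 1 / (i * ln i)"
proof -
  have a0: "ln i > 0" using i by simp
  have ab: "ln i < ln (i+1)" using i by simp
  have d1: "1 / (i+1) \<le> ln (i+1) - ln i"
    using ln_diff_bounds(1)[of i "i+1"] i by simp
  have d2: "ln (i+1) - ln i \<le> 1 / i"
    using ln_diff_bounds(2)[of i "i+1"] i by simp
  have "(ln (i+1) - ln i) / ln (i+1) \<le> ln (ln (i+1)) - ln (ln i)"
    using ln_diff_bounds(1)[OF a0 ab] .
  moreover have "1 / ((i+1) * ln (i+1)) \<le> (ln (i+1) - ln i) / ln (i+1)"
  proof -
    have "1 / ((i+1) * ln (i+1)) = (1 / (i+1)) / ln (i+1)" by simp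
    also have "\<dots> \<le> (ln (i+1) - ln i) / ln (i+1)"
      by (rule divide_right_mono[OF d1]) (use a0 ab in linarith)
    finally show ?thesis .
  qed
  ultimately show "1 / ((i+1) * ln (i+1)) \<le> ln (ln (i+1)) - ln (ln i)" by linarith
  have "ln (ln (i+1)) - ln (ln i) \<le> (ln (i+1) - ln i) / ln i"
    using ln_diff_bounds(2)[OF a0 ab] .
  also have "\<dots> \<le> (1 / i) / ln i"
    by (rule divide_right_mono[OF d2]) (use a0 in linarith)
  also have "\<dots> = 1 / (i * ln i)" by simp
  finally show "ln (ln (i+1)) - ln (ln i) \<le> 1 / (i * ln i)" .
qed

definition wt :: "nat \<Rightarrow> real" where "wt i = 1 / (real i * ln (1 + real i))"
definition hh :: "real \<Rightarrow> real" where "hh x = 1 / (x * ln x)"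
definition FF :: "nat \<Rightarrow> real" where "FF t = (\<Sum>i=1..t. wt i) - ln (ln (real t + 1))"

lemma wt_nonneg: "wt i \<ge> 0"
  unfolding wt_def by (cases "i = 0") auto

lemma wt_pos: "i \<ge> 1 \<Longrightarrow> wt i > 0"
  unfolding wt_def by auto

lemma wt_dec:
  assumes i: "i \<ge> 1"
  shows "wt (Suc i) \<le> wt i"
proof -
  have l1: "ln (1 + real i) > 0" using i by simp
  have l2: "ln (1 + real i) \<le> ln (1 + real (Suc i))" using i by simp
  have "real i * ln (1 + real i) \<le> real (Suc i) * ln (1 + real (Suc i))"
    using l1 l2 by (intro mult_mono) auto
  then show ?thesis unfolding wt_def
    using l1 i by (intro divide_left_mono) (auto intro!: mult_pos_pos)
qed

lemma wt_Suc_bounds: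
  assumes n: "n \<ge> 1"
  shows "hh (real n + 2) \<le> wt (Suc n)" "wt (Suc n) \<le> hh (real n + 1)"
proof -
  have e: "wt (Suc n) = 1 / ((real n + 1) * ln (real n + 2))"
    unfolding wt_def by (simp add: add.commute add.left_commute)
  have l1: "ln (real n + 1) > 0" using n by simp
  have l2: "ln (real n + 1) \<le> ln (real n + 2)" using n by simp
  have "(real n + 1) * ln (real n + 2) \<le> (real n + 2) * ln (real n + 2)"
    using l1 l2 by (intro mult_right_mono) auto
  then show "hh (real n + 2) \<le> wt (Suc n)" unfolding e hh_def
    using l1 l2 by (intro divide_left_mono) (auto intro!: mult_pos_pos)
  have "(real n + 1) * ln (real n + 1) \<le> (real n + 1) * ln (real n + 2)"
    using l2 by (intro mult_left_mono) auto
  then show "wt (Suc n) \<le> hh (real n + 1)" unfolding e hh_def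
    using l1 l2 by (intro divide_left_mono) (auto intro!: mult_pos_pos)
qed

lemma FF_step:
  assumes n: "n \<ge> 1"
  shows "FF (Suc n) + hh (real n + 2) \<le> FF n + hh (real n + 1)"
    and "FF n - hh (real n + 1) \<le> FF (Suc n) - hh (real n + 2)"
proof -
  have st: "hh (real n + 2) \<le> ln (ln (real n + 2)) - ln (ln (real n + 1))"
           "ln (ln (real n + 2)) - ln (ln (real n + 1)) \<le> hh (real n + 1)"
    using lnln_step[of "real n + 1"] n by (simp_all add: hh_def add.commute add.left_commute)
  have f: "FF (Suc n) = FF n + wt (Suc n) - (ln (ln (real n + 2)) - ln (ln (real n + 1)))"
    unfolding FF_def by (simp add: add.commute add.left_commute)
  show "FF (Suc n) + hh (real n + 2) \<le> FF n + hh (real n + 1)"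
    using f st wt_Suc_bounds[OF n] by linarith
  show "FF n - hh (real n + 1) \<le> FF (Suc n) - hh (real n + 2)"
    using f st wt_Suc_bounds[OF n] by linarith
qed

lemma FF_mono:
  assumes "1 \<le> t"
  shows "FF t + hh (real t + 1) \<le> FF 1 + hh 2 \<and> FF 1 - hh 2 \<le> FF t - hh (real t + 1)"
  using assms
proof (induction t rule: dec_induct)
  case base then show ?case by simp
next
  case (step n)
  then show ?case using FF_step[of n] by (simp add: add.commute add.left_commute)
qed

lemma hh_nonneg: "x \<ge> 1 \<Longrightarrow> hh x \<ge> 0"
  unfolding hh_def by simp

lemma FF_bound:
  assumes "1 \<le> t"
  shows "\<bar>FF t\<bar> \<le> \<bar>FF 1\<bar> + hh 2"
  using FF_mono[OF assms] hh_nonneg[of "real t + 1"] by auto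

lemma wt_tw: "(\<lambda>t. real t * wt (Suc t)) \<longlonglongrightarrow> 0"
  unfolding wt_def by (simp add: of_nat_Suc) real_asymp

lemma W_eq: "(\<Sum>i=1..t. wt i) = FF t + ln (ln (real t + 1))"
  unfolding FF_def by simp

lemma W_top: "filterlim (\<lambda>t. \<Sum>i=1..t. wt i) at_top sequentially"
proof (rule filterlim_at_top_mono)
  define C where "C = \<bar>FF 1\<bar> + hh 2"
  show "filterlim (\<lambda>t::nat. ln (ln (real t + 1)) - C) at_top sequentially"
    by real_asymp
  show "eventually (\<lambda>t. ln (ln (real t + 1)) - C \<le> (\<Sum>i=1..t. wt i)) sequentially"
    using eventually_ge_at_top[of "1::nat"]
  proof (rule eventually_mono)
    fix t :: nat assume "1 \<le> t"
    then show "ln (ln (real t + 1)) - C \<le> (\<Sum>i=1..t. wt i)"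
      using FF_bound[of t] unfolding W_eq C_def by linarith
  qed
qed

lemma W_lnln: "(\<lambda>t. (\<Sum>i=1..t. wt i) / ln (ln (real t))) \<longlonglongrightarrow> 1"
proof -
  define C where "C = \<bar>FF 1\<bar> + hh 2"
  have a: "(\<lambda>t::nat. ln (ln (real t + 1)) / ln (ln (real t))) \<longlonglongrightarrow> 1"
    by real_asymp
  have b: "(\<lambda>t. FF t / ln (ln (real t))) \<longlonglongrightarrow> 0"
  proof (rule Lim_null_comparison)
    show "(\<lambda>t::nat. C / ln (ln (real t))) \<longlonglongrightarrow> 0" by real_asymp
    show "eventually (\<lambda>t. norm (FF t / ln (ln (real t))) \<le> C / ln (ln (real t))) sequentially"
      using eventually_ge_at_top[of "4::nat"]
    proof (rule eventually_mono)
      fix t :: nat assume t: "4 \<le> t"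
      then have "real t \<ge> 4" by simp
      then have "exp 1 < real t" using exp_le by linarith
      then have "ln (exp 1) < ln (real t)" using t by (subst ln_less_cancel_iff) auto
      then have "ln (real t) > 1" by simp
      then have p: "ln (ln (real t)) > 0" by simp
      show "norm (FF t / ln (ln (real t))) \<le> C / ln (ln (real t))"
        using FF_bound[of t] t p by (simp add: C_def abs_divide divide_right_mono)
    qed
  qed
  show ?thesis unfolding W_eq add_divide_distrib
    using tendsto_add[OF b a] by simp
qed

lemma avg_shift:
  fixes S :: "nat \<Rightarrow> real"
  assumes "(\<lambda>t. S t / real t) \<longlonglongrightarrow> L"
  shows "(\<lambda>t. (a + S t) / (real t + 1)) \<longlonglongrightarrow> L"
proof -
  have l1: "(\<lambda>t::nat. a / (real t + 1)) \<longlonglongrightarrow> 0" by real_asymp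
  have l2: "(\<lambda>t::nat. real t / (real t + 1)) \<longlonglongrightarrow> 1" by real_asymp
  have "(\<lambda>t. a / (real t + 1) + (S t / real t) * (real t / (real t + 1))) \<longlonglongrightarrow> 0 + L * 1"
    by (intro tendsto_intros l1 l2 assms)
  then have "(\<lambda>t. a / (real t + 1) + (S t / real t) * (real t / (real t + 1))) \<longlonglongrightarrow> L" by simp
  then show ?thesis
  proof (rule Lim_transform_eventually)
    show "eventually (\<lambda>t. a / (real t + 1) + (S t / real t) * (real t / (real t + 1)) = (a + S t) / (real t + 1)) sequentially"
      using eventually_ge_at_top[of "1::nat"]
    proof (rule eventually_mono)
      fix t :: nat assume "1 \<le> t"
      then have "real t \<noteq> 0" by simp
      then have "(S t / real t) * (real t / (real t + 1)) = S t / (real t + 1)" by simp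
      then show "a / (real t + 1) + (S t / real t) * (real t / (real t + 1)) = (a + S t) / (real t + 1)"
        by (simp add: add_divide_distrib)
    qed
  qed
qed

lemma psiE_lim: "((\<lambda>x. psiE x / x^2) \<longlongrightarrow> 1/2) (at_right 0)"
  unfolding psiE_def by real_asymp

lemma sq_diff_bound:
  fixes a b c :: real
  assumes "0 \<le> a" "a \<le> 1" "0 \<le> b" "b \<le> 1" "0 \<le> c" "c \<le> 1"
  shows "\<bar>(a - b)^2 - (a - c)^2\<bar> \<le> 2 * \<bar>b - c\<bar>"
proof -
  have eq: "(a - b)^2 - (a - c)^2 = (c - b) * (2*a - b - c)"
    by (simp add: power2_eq_square algebra_simps)
  have "\<bar>2*a - b - c\<bar> \<le> 2" using assms by (simp add: abs_le_iff)
  then have "\<bar>c - b\<bar> * \<bar>2*a - b - c\<bar> \<le> \<bar>c - b\<bar> * 2" by (intro mult_left_mono) auto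
  then show ?thesis unfolding eq abs_mult by (simp add: abs_minus_commute mult.commute)
qed

lemma aux_alg: "W \<noteq> 0 \<Longrightarrow> c * (A / W + B / W) * (W / L) = c * (A + B) / (L::real)"
  by (cases "L = 0") (simp_all add: field_simps)

lemma deterministic:
  fixes X :: "nat \<Rightarrow> 'a \<Rightarrow> real" and \<omega> :: 'a and \<alpha> \<mu> \<sigma>2 :: real
  assumes range: "\<And>i. i \<ge> 1 \<Longrightarrow> X i \<omega> \<in> {0..1}"
    and m1: "(\<lambda>n. (\<Sum>i=1..n. X i \<omega>) / real n) \<longlonglongrightarrow> \<mu>"
    and m2: "(\<lambda>n. (\<Sum>i=1..n. (X i \<omega> - \<mu>)^2) / real n) \<longlonglongrightarrow> \<sigma>2"
    and \<sigma>: "\<sigma>2 > 0" and \<alpha>: "0 < \<alpha>" "\<alpha> < 1"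
  shows "(\<lambda>t. \<Sum>i=1..t. (X i \<omega> - mu_hat X (i - 1) \<omega>)^2 * psiE (lam \<alpha> X i \<omega>))
            \<sim>[sequentially] (\<lambda>t. ln (2 / \<alpha>) * ln (ln (real t)))"
proof -
  define c where "c = ln (2/\<alpha>)"
  have c: "c > 0" using \<alpha> unfolding c_def by simp
  define x where "x i = X i \<omega>" for i
  define m where "m t = mu_hat X t \<omega>" for t
  define s where "s t = sigma2_hat X t \<omega>" for t
  define l where "l i = lam \<alpha> X i \<omega>" for i
  have x01: "0 \<le> x i" "x i \<le> 1" if "i \<ge> 1" for i using range[OF that] by (simp_all add: x_def)
  have sumx: "0 \<le> (\<Sum>i=1..t. x i)" "(\<Sum>i=1..t. x i) \<le> real t" for t
  proof -
    show "0 \<le> (\<Sum>i=1..t. x i)" using x01 by (intro sum_nonneg) auto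
    have "(\<Sum>i=1..t. x i) \<le> (\<Sum>i=1..t. 1)" using x01 by (intro sum_mono) auto
    then show "(\<Sum>i=1..t. x i) \<le> real t" by simp
  qed
  have m1': "(\<lambda>n. (\<Sum>i=1..n. x i) / real n) \<longlonglongrightarrow> \<mu>" using m1 by (simp add: x_def)
  have \<mu>0: "0 \<le> \<mu>"
    by (rule LIMSEQ_le_const[OF m1']) (use sumx in auto)
  have \<mu>1: "\<mu> \<le> 1"
  proof (rule LIMSEQ_le_const2[OF m1'], intro exI allI impI)
    fix n :: nat assume "n \<ge> 1"
    then show "(\<Sum>i=1..n. x i) / real n \<le> 1" using sumx[of n] by simp
  qed
  have m_eq: "m t = (1/2 + (\<Sum>i=1..t. x i)) / (real t + 1)" for t
    by (simp add: m_def mu_hat_def x_def)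
  have m01: "0 \<le> m t" "m t \<le> 1" for t
  proof -
    have p: "real t + 1 > 0" by simp
    show "0 \<le> m t" unfolding m_eq using sumx[of t] p by (intro divide_nonneg_pos) auto
    show "m t \<le> 1" unfolding m_eq using sumx[of t] p by (subst pos_divide_le_eq[OF p]) simp
  qed
  have m_lim: "m \<longlonglongrightarrow> \<mu>" unfolding m_eq by (rule avg_shift[OF m1'])
  have m_lim': "(\<lambda>i. m (i - 1)) \<longlonglongrightarrow> \<mu>" by (rule LIMSEQ_imp_Suc) (simp add: m_lim)
  define e where "e i = (x i - m i)^2 - (x i - \<mu>)^2" for i
  have e_lim: "e \<longlonglongrightarrow> 0"
  proof (rule Lim_null_comparison)
    show "eventually (\<lambda>i. norm (e i) \<le> 2 * \<bar>m i - \<mu>\<bar>) sequentially"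
      using eventually_ge_at_top[of "1::nat"]
      by (rule eventually_mono) (use x01 m01 \<mu>0 \<mu>1 in \<open>auto simp: e_def intro!: sq_diff_bound\<close>)
    have "(\<lambda>i. 2 * \<bar>m i - \<mu>\<bar>) \<longlonglongrightarrow> 2 * \<bar>\<mu> - \<mu>\<bar>" by (intro tendsto_intros m_lim)
    then show "(\<lambda>i. 2 * \<bar>m i - \<mu>\<bar>) \<longlonglongrightarrow> 0" by simp
  qed
  have e_avg: "(\<lambda>t. (\<Sum>i=1..t. 1 * e i) / real t) \<longlonglongrightarrow> 0"
    by (rule weighted_null[OF _ e_lim filterlim_real_sequentially]) auto
  have s_eq: "s t = (1/4 + (\<Sum>i=1..t. (x i - m i)^2)) / (real t + 1)" for t
    by (simp add: s_def sigma2_hat_def x_def m_def)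
  have s_lim: "s \<longlonglongrightarrow> \<sigma>2" unfolding s_eq
  proof (rule avg_shift)
    have "(\<lambda>t. (\<Sum>i=1..t. (x i - \<mu>)^2) / real t + (\<Sum>i=1..t. 1 * e i) / real t) \<longlonglongrightarrow> \<sigma>2 + 0"
      by (intro tendsto_add e_avg) (use m2 in \<open>simp add: x_def\<close>)
    moreover have "(\<Sum>i=1..t. (x i - \<mu>)^2) / real t + (\<Sum>i=1..t. 1 * e i) / real t
        = (\<Sum>i=1..t. (x i - m i)^2) / real t" for t
      by (simp add: e_def sum_subtractf flip: add_divide_distrib)
    ultimately show "(\<lambda>t. (\<Sum>i=1..t. (x i - m i)^2) / real t) \<longlonglongrightarrow> \<sigma>2" by simp
  qed
  have s_pos: "s t > 0" for t
  proof -
    have "0 \<le> (\<Sum>i=1..t. (x i - m i)^2)" by (intro sum_nonneg) auto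
    then show ?thesis unfolding s_eq by (intro divide_pos_pos) auto
  qed
  have s_lim': "(\<lambda>i. s (i - 1)) \<longlonglongrightarrow> \<sigma>2" by (rule LIMSEQ_imp_Suc) (simp add: s_lim)
  define g where "g i = 2 * c * wt i / s (i - 1)" for i
  have l_eq: "l i = min (sqrt (g i)) (1/2)" for i
    by (simp add: l_def lam_def g_def wt_def c_def s_def field_simps)
  have wt_lim: "wt \<longlonglongrightarrow> 0" unfolding wt_def by real_asymp
  have g_lim: "g \<longlonglongrightarrow> 0"
  proof -
    have "g \<longlonglongrightarrow> 2 * c * 0 / \<sigma>2" unfolding g_def
      by (intro tendsto_intros wt_lim s_lim') (use \<sigma> in simp)
    then show ?thesis by simp
  qed
  have sg_lim: "(\<lambda>i. sqrt (g i)) \<longlonglongrightarrow> 0"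
    using tendsto_real_sqrt[OF g_lim] by simp
  have l_lim: "l \<longlonglongrightarrow> 0"
  proof -
    have "(\<lambda>i. min (sqrt (g i)) (1/2)) \<longlonglongrightarrow> min 0 (1/2)"
      by (intro tendsto_min sg_lim tendsto_const)
    then show ?thesis by (simp add: l_eq[abs_def])
  qed
  have g_pos: "g i > 0" if "i \<ge> 1" for i
    unfolding g_def using c wt_pos[OF that] s_pos[of "i - 1"] by (intro divide_pos_pos mult_pos_pos) auto
  have l_pos: "l i > 0" if "i \<ge> 1" for i
  proof -
    have "0 < sqrt (g i)" using g_pos[OF that] by (rule real_sqrt_gt_zero)
    then show ?thesis unfolding l_eq by simp
  qed
  have ev_small: "eventually (\<lambda>i. sqrt (g i) < 1/2) sequentially"
    using order_tendstoD(2)[OF sg_lim, of "1/2"] by simp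
  define Q where "Q i = psiE (l i) / (c * wt i)" for i
  have Q_lim: "Q \<longlonglongrightarrow> 1 / \<sigma>2"
  proof -
    have lf: "filterlim l (at_right 0) sequentially"
      by (rule tendsto_imp_filterlim_at_right[OF l_lim])
         (rule eventually_mono[OF eventually_ge_at_top[of "1::nat"]], simp add: l_pos)
    have A: "(\<lambda>i. psiE (l i) / (l i)^2) \<longlonglongrightarrow> 1/2"
      using filterlim_compose[OF psiE_lim lf] by simp
    have B: "(\<lambda>i. 2 / s (i - 1)) \<longlonglongrightarrow> 2 / \<sigma>2"
      by (intro tendsto_intros s_lim') (use \<sigma> in simp)
    have "(\<lambda>i. psiE (l i) / (l i)^2 * (2 / s (i - 1))) \<longlonglongrightarrow> 1/2 * (2 / \<sigma>2)"
      by (rule tendsto_mult[OF A B])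
    then have "(\<lambda>i. psiE (l i) / (l i)^2 * (2 / s (i - 1))) \<longlonglongrightarrow> 1 / \<sigma>2" by simp
    then show ?thesis
    proof (rule Lim_transform_eventually)
      show "eventually (\<lambda>i. psiE (l i) / (l i)^2 * (2 / s (i - 1)) = Q i) sequentially"
        using eventually_conj[OF ev_small eventually_ge_at_top[of "1::nat"]]
      proof (rule eventually_mono)
        fix i :: nat assume a: "sqrt (g i) < 1/2 \<and> 1 \<le> i"
        then have li: "l i = sqrt (g i)" unfolding l_eq by simp
        have "(l i)^2 = g i" unfolding li using g_pos[of i] a by simp
        then have l2: "(l i)^2 = 2 * c * wt i / s (i - 1)" by (simp add: g_def)
        have w: "wt i > 0" using wt_pos a by simp
        have sp: "s (i - 1) > 0" by (rule s_pos)
        have lp: "l i > 0" using l_pos a by simp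
        show "psiE (l i) / (l i)^2 * (2 / s (i - 1)) = Q i"
          unfolding Q_def l2 using w sp c by (simp add: field_simps)
      qed
    qed
  qed
  define y where "y i = (x i - \<mu>)^2 / \<sigma>2" for i
  define z where "z i = (x i - m (i - 1))^2 * Q i - y i" for i
  have z_lim: "z \<longlonglongrightarrow> 0"
  proof (rule Lim_null_comparison)
    show "eventually (\<lambda>i. norm (z i) \<le> 2 * \<bar>m (i - 1) - \<mu>\<bar> * \<bar>Q i\<bar> + \<bar>Q i - 1 / \<sigma>2\<bar>) sequentially"
      using eventually_ge_at_top[of "1::nat"]
    proof (rule eventually_mono)
      fix i :: nat assume i: "1 \<le> i"
      have zeq: "z i = ((x i - m (i - 1))^2 - (x i - \<mu>)^2) * Q i + (x i - \<mu>)^2 * (Q i - 1 / \<sigma>2)"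
        unfolding z_def y_def using \<sigma> by (simp add: field_simps)
      have b1: "\<bar>(x i - m (i - 1))^2 - (x i - \<mu>)^2\<bar> \<le> 2 * \<bar>m (i - 1) - \<mu>\<bar>"
        by (rule sq_diff_bound) (use x01[OF i] m01 \<mu>0 \<mu>1 in auto)
      have b2: "(x i - \<mu>)^2 \<le> 1"
      proof -
        have "\<bar>x i - \<mu>\<bar> \<le> 1" using x01[OF i] \<mu>0 \<mu>1 by (simp add: abs_le_iff)
        then show ?thesis by (simp add: abs_square_le_1)
      qed
      have "\<bar>z i\<bar> \<le> \<bar>(x i - m (i - 1))^2 - (x i - \<mu>)^2\<bar> * \<bar>Q i\<bar> + (x i - \<mu>)^2 * \<bar>Q i - 1 / \<sigma>2\<bar>"
        unfolding zeq by (rule order_trans[OF abs_triangle_ineq]) (simp add: abs_mult)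
      also have "\<dots> \<le> 2 * \<bar>m (i - 1) - \<mu>\<bar> * \<bar>Q i\<bar> + 1 * \<bar>Q i - 1 / \<sigma>2\<bar>"
        by (intro add_mono mult_right_mono b1 b2) auto
      finally show "norm (z i) \<le> 2 * \<bar>m (i - 1) - \<mu>\<bar> * \<bar>Q i\<bar> + \<bar>Q i - 1 / \<sigma>2\<bar>" by simp
    qed
    have "(\<lambda>i. 2 * \<bar>m (i - 1) - \<mu>\<bar> * \<bar>Q i\<bar> + \<bar>Q i - 1 / \<sigma>2\<bar>) \<longlonglongrightarrow>
          2 * \<bar>\<mu> - \<mu>\<bar> * \<bar>1 / \<sigma>2\<bar> + \<bar>1 / \<sigma>2 - 1 / \<sigma>2\<bar>"
      by (intro tendsto_intros m_lim' Q_lim)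
    then show "(\<lambda>i. 2 * \<bar>m (i - 1) - \<mu>\<bar> * \<bar>Q i\<bar> + \<bar>Q i - 1 / \<sigma>2\<bar>) \<longlonglongrightarrow> 0" by simp
  qed
  define W where "W t = (\<Sum>i=1..t. wt i)" for t
  have W_pos: "W t > 0" if "t \<ge> 1" for t
  proof -
    have "wt 1 \<le> W t" unfolding W_def using that wt_nonneg
      by (intro member_le_sum) auto
    then show ?thesis using wt_pos[of 1] by simp
  qed
  have WT: "filterlim W at_top sequentially" unfolding W_def[abs_def] by (rule W_top)
  have sum_eq: "(\<Sum>i=1..t. (X i \<omega> - mu_hat X (i - 1) \<omega>)^2 * psiE (lam \<alpha> X i \<omega>))
      = c * ((\<Sum>i=1..t. wt i * y i) + (\<Sum>i=1..t. wt i * z i))" for t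
  proof -
    have "(\<Sum>i=1..t. (X i \<omega> - mu_hat X (i - 1) \<omega>)^2 * psiE (lam \<alpha> X i \<omega>))
        = (\<Sum>i=1..t. c * (wt i * y i + wt i * z i))"
    proof (rule sum.cong)
      fix i assume "i \<in> {1..t}"
      then have w: "wt i > 0" using wt_pos by simp
      show "(X i \<omega> - mu_hat X (i - 1) \<omega>)^2 * psiE (lam \<alpha> X i \<omega>) = c * (wt i * y i + wt i * z i)"
        unfolding z_def Q_def using w c by (simp add: x_def m_def l_def field_simps)
    qed simp
    then show ?thesis by (simp add: sum_distrib_left sum.distrib distrib_left)
  qed
  have Y: "(\<lambda>t. (\<Sum>i=1..t. wt i * y i) / W t) \<longlonglongrightarrow> 1"
  proof -
    have avg: "(\<lambda>t. (\<Sum>j=1..t. y j - 1) / real t) \<longlonglongrightarrow> 0"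
    proof -
      have "(\<lambda>t. ((\<Sum>i=1..t. (X i \<omega> - \<mu>)^2) / real t) / \<sigma>2 - 1) \<longlonglongrightarrow> \<sigma>2 / \<sigma>2 - 1"
        by (intro tendsto_intros m2) (use \<sigma> in simp)
      then have "(\<lambda>t. ((\<Sum>i=1..t. (X i \<omega> - \<mu>)^2) / real t) / \<sigma>2 - 1) \<longlonglongrightarrow> 0" using \<sigma> by simp
      then show ?thesis
      proof (rule Lim_transform_eventually)
        show "eventually (\<lambda>t. ((\<Sum>i=1..t. (X i \<omega> - \<mu>)^2) / real t) / \<sigma>2 - 1 = (\<Sum>j=1..t. y j - 1) / real t) sequentially"
          using eventually_ge_at_top[of "1::nat"]
        proof (rule eventually_mono)
          fix t :: nat assume "1 \<le> t"
          then have t: "real t > 0" by simp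
          have hE: "(\<Sum>j=1..t. y j - 1) = (\<Sum>i=1..t. (X i \<omega> - \<mu>)^2) / \<sigma>2 - real t"
            by (simp add: sum_subtractf y_def x_def sum_divide_distrib)
          show "((\<Sum>i=1..t. (X i \<omega> - \<mu>)^2) / real t) / \<sigma>2 - 1 = (\<Sum>j=1..t. y j - 1) / real t"
            unfolding hE using t \<sigma> by (simp add: field_simps)
        qed
      qed
    qed
    have D: "(\<lambda>t. (\<Sum>i=1..t. wt i * (y i - 1)) / W t) \<longlonglongrightarrow> 0"
      by (rule weighted_avg[OF wt_nonneg _ avg wt_tw WT W_def])
         (rule wt_dec)
    have "(\<lambda>t. 1 + (\<Sum>i=1..t. wt i * (y i - 1)) / W t) \<longlonglongrightarrow> 1 + 0"
      by (intro tendsto_add tendsto_const D)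
    then have "(\<lambda>t. 1 + (\<Sum>i=1..t. wt i * (y i - 1)) / W t) \<longlonglongrightarrow> 1" by simp
    then show ?thesis
    proof (rule Lim_transform_eventually)
      show "eventually (\<lambda>t. 1 + (\<Sum>i=1..t. wt i * (y i - 1)) / W t = (\<Sum>i=1..t. wt i * y i) / W t) sequentially"
        using eventually_ge_at_top[of "1::nat"]
      proof (rule eventually_mono)
        fix t :: nat assume "1 \<le> t"
        then have "W t > 0" by (rule W_pos)
        moreover have "(\<Sum>i=1..t. wt i * (y i - 1)) = (\<Sum>i=1..t. wt i * y i) - W t"
          by (simp add: W_def algebra_simps sum_subtractf)
        ultimately show "1 + (\<Sum>i=1..t. wt i * (y i - 1)) / W t = (\<Sum>i=1..t. wt i * y i) / W t"
          by (simp add: field_simps)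
      qed
    qed
  qed
  have Z: "(\<lambda>t. (\<Sum>i=1..t. wt i * z i) / W t) \<longlonglongrightarrow> 0"
    by (rule weighted_null[OF wt_nonneg z_lim WT]) (simp add: W_def)
  have WL: "(\<lambda>t. W t / ln (ln (real t))) \<longlonglongrightarrow> 1"
    unfolding W_def by (rule W_lnln)
  have "(\<lambda>t. c * ((\<Sum>i=1..t. wt i * y i) / W t + (\<Sum>i=1..t. wt i * z i) / W t) * (W t / ln (ln (real t))))
          \<longlonglongrightarrow> c * (1 + 0) * 1"
    by (intro tendsto_intros Y Z WL)
  then have "(\<lambda>t. c * ((\<Sum>i=1..t. wt i * y i) / W t + (\<Sum>i=1..t. wt i * z i) / W t) * (W t / ln (ln (real t))))
          \<longlonglongrightarrow> c" by simp
  then have lim: "(\<lambda>t. (\<Sum>i=1..t. (X i \<omega> - mu_hat X (i - 1) \<omega>)^2 * psiE (lam \<alpha> X i \<omega>)) / ln (ln (real t))) \<longlonglongrightarrow> c"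
  proof (rule Lim_transform_eventually)
    show "eventually (\<lambda>t. c * ((\<Sum>i=1..t. wt i * y i) / W t + (\<Sum>i=1..t. wt i * z i) / W t) * (W t / ln (ln (real t)))
       = (\<Sum>i=1..t. (X i \<omega> - mu_hat X (i - 1) \<omega>)^2 * psiE (lam \<alpha> X i \<omega>)) / ln (ln (real t))) sequentially"
      using eventually_ge_at_top[of "1::nat"]
    proof (rule eventually_mono)
      fix t :: nat assume "1 \<le> t"
      then have "W t > 0" by (rule W_pos)
      then show "c * ((\<Sum>i=1..t. wt i * y i) / W t + (\<Sum>i=1..t. wt i * z i) / W t) * (W t / ln (ln (real t)))
       = (\<Sum>i=1..t. (X i \<omega> - mu_hat X (i - 1) \<omega>)^2 * psiE (lam \<alpha> X i \<omega>)) / ln (ln (real t))"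
        unfolding sum_eq by (intro aux_alg) simp
    qed
  qed
  show ?thesis unfolding c_def[symmetric]
    by (rule asymp_equivI'_const[OF lim]) (use c in simp)
qed

lemma slln_bounded:
  fixes M :: "'a measure" and Y :: "nat \<Rightarrow> 'a \<Rightarrow> real" and a b :: real
  assumes P: "prob_space M"
    and meas: "\<And>i. i \<ge> 1 \<Longrightarrow> Y i \<in> borel_measurable M"
    and ind: "prob_space.indep_vars M (\<lambda>_. borel) Y {1..}"
    and dist: "\<And>i. i \<ge> 1 \<Longrightarrow> distr M borel (Y i) = distr M borel (Y 1)"
    and rng: "\<And>i \<omega>. i \<ge> 1 \<Longrightarrow> \<omega> \<in> space M \<Longrightarrow> Y i \<omega> \<in> {a..b}"
    and ab: "a < b"
  shows "AE \<omega> in M. (\<lambda>n. (\<Sum>i=1..n. Y i \<omega>) / real n) \<longlonglongrightarrow> prob_space.expectation M (Y 1)"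
proof -
  interpret prob_space M by (rule P)
  define \<mu> where "\<mu> = expectation (Y 1)"
  define A where "A \<epsilon> n = {\<omega>\<in>space M. \<bar>(\<Sum>i=1..n. Y i \<omega>) / real n - \<mu>\<bar> \<ge> \<epsilon>}" for \<epsilon> n
  have Ameas: "A \<epsilon> n \<in> sets M" for \<epsilon> n
  proof -
    have "(\<lambda>\<omega>. \<bar>(\<Sum>i=1..n. Y i \<omega>) / real n - \<mu>\<bar>) \<in> borel_measurable M"
      using meas by (intro borel_measurable_abs borel_measurable_diff borel_measurable_divide
            borel_measurable_sum borel_measurable_const) auto
    then show ?thesis unfolding A_def by measurable
  qed
  have hoeff: "measure M (A \<epsilon> n) \<le> 2 * exp (-2 * real n * \<epsilon>^2 / (b - a)^2)" if n: "n \<ge> 1" and e: "\<epsilon> \<ge> 0" for \<epsilon> n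
  proof -
    interpret H: Hoeffding_ineq_iid M "{1..n}" Y "Y 1" a b \<mu>
    proof (unfold_locales)
      show "finite {1..n}" by simp
      show "indep_vars (\<lambda>_. borel) Y {1..n}" by (rule indep_vars_subset[OF ind]) auto
      show "distr M borel (Y i) = distr M borel (Y 1)" if "i \<in> {1..n}" for i by (rule dist) (use that in auto)
      show "random_variable borel (Y 1)" using meas by simp
      show "AE x in M. Y 1 x \<in> {a..b}" using rng[of 1] by (intro AE_I2) simp
    qed (simp add: \<mu>_def)
    have "{1..n} \<noteq> {}" using n by simp
    from H.Hoeffding_ineq_abs_ge'[OF e ab this] show ?thesis
      by (simp add: A_def)
  qed
  have ev: "AE \<omega> in M. eventually (\<lambda>n. \<bar>(\<Sum>i=1..n. Y i \<omega>) / real n - \<mu>\<bar> < inverse (real (Suc k))) sequentially" for k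
  proof -
    define \<epsilon> where "\<epsilon> = inverse (real (Suc k))"
    have e: "\<epsilon> > 0" by (simp add: \<epsilon>_def)
    define q where "q = exp (-2 * \<epsilon>^2 / (b - a)^2)"
    have q: "0 \<le> q" "q < 1" using e ab by (simp_all add: q_def)
    have "summable (\<lambda>n. measure M (A \<epsilon> n))"
    proof (rule summable_comparison_test')
      show "summable (\<lambda>n. 2 * q ^ n)" using q by (intro summable_mult summable_geometric) simp
      fix n :: nat assume "n \<ge> 1"
      have "exp (-2 * real n * \<epsilon>^2 / (b - a)^2) = exp (real n * (-2 * \<epsilon>^2 / (b - a)^2))"
        by (simp add: algebra_simps)
      also have "\<dots> = q ^ n" unfolding q_def by (rule exp_of_nat_mult)
      finally show "norm (measure M (A \<epsilon> n)) \<le> 2 * q ^ n"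
        using hoeff[OF \<open>n \<ge> 1\<close>, of \<epsilon>] e by simp
    qed
    then have "AE \<omega> in M. eventually (\<lambda>n. \<omega> \<in> space M - A \<epsilon> n) sequentially"
      by (intro borel_cantelli_AE1 Ameas) (auto simp: emeasure_eq_measure)
    then show ?thesis
    proof (rule eventually_mono)
      fix \<omega> assume "eventually (\<lambda>n. \<omega> \<in> space M - A \<epsilon> n) sequentially"
      then show "eventually (\<lambda>n. \<bar>(\<Sum>i=1..n. Y i \<omega>) / real n - \<mu>\<bar> < inverse (real (Suc k))) sequentially"
        by (rule eventually_mono) (auto simp: A_def \<epsilon>_def)
    qed
  qed
  then have "AE \<omega> in M. \<forall>k. eventually (\<lambda>n. \<bar>(\<Sum>i=1..n. Y i \<omega>) / real n - \<mu>\<bar> < inverse (real (Suc k))) sequentially"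
    by (subst AE_all_countable) auto
  then show ?thesis
  proof (rule eventually_mono)
    fix \<omega> assume H: "\<forall>k. eventually (\<lambda>n. \<bar>(\<Sum>i=1..n. Y i \<omega>) / real n - \<mu>\<bar> < inverse (real (Suc k))) sequentially"
    show "(\<lambda>n. (\<Sum>i=1..n. Y i \<omega>) / real n) \<longlonglongrightarrow> expectation (Y 1)"
      unfolding \<mu>_def[symmetric]
    proof (rule tendstoI)
      fix r :: real assume "r > 0"
      then obtain k :: nat where k: "k > 0" "inverse (real k) < r"
        using ex_inverse_of_nat_less by blast
      then obtain k' where "k = Suc k'" by (cases k) auto
      with k have "inverse (real (Suc k')) < r" by simp
      with H[rule_format, of k'] show "eventually (\<lambda>n. dist ((\<Sum>i=1..n. Y i \<omega>) / real n) \<mu> < r) sequentially"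
        by (elim eventually_mono) (simp add: dist_real_def)
    qed
  qed
qed

theorem mainTheorem16:
  fixes M :: "'a measure" and X :: "nat \<Rightarrow> 'a \<Rightarrow> real" and \<alpha> \<sigma>2 :: real
  assumes "prob_space M"
    and "\<And>i. i \<ge> 1 \<Longrightarrow> X i \<in> borel_measurable M"
    and "prob_space.indep_vars M (\<lambda>_. borel) X {1..}"
    and "\<And>i. i \<ge> 1 \<Longrightarrow> distr M borel (X i) = distr M borel (X 1)"
    and "\<And>i \<omega>. i \<ge> 1 \<Longrightarrow> \<omega> \<in> space M \<Longrightarrow> X i \<omega> \<in> {0..1}"
    and "prob_space.variance M (X 1) = \<sigma>2" and "\<sigma>2 > 0"
    and "0 < \<alpha>" and "\<alpha> < 1"
  shows "AE \<omega> in M. (\<lambda>t. \<Sum>i=1..t. (X i \<omega> - mu_hat X (i - 1) \<omega>)^2 * psiE (lam \<alpha> X i \<omega>))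
            \<sim>[sequentially] (\<lambda>t. ln (2 / \<alpha>) * ln (ln (real t)))"
proof -
  note P = assms(1) and meas = assms(2) and ind = assms(3) and dist = assms(4) and rng = assms(5)
  interpret prob_space M by (rule P)
  define \<mu> where "\<mu> = expectation (X 1)"
  define Y where "Y i \<omega> = (X i \<omega> - \<mu>)^2" for i \<omega>
  have Yf: "Y i = (\<lambda>\<omega>. (X i \<omega> - \<mu>)^2)" for i by (simp add: Y_def fun_eq_iff)
  have S1: "AE \<omega> in M. (\<lambda>n. (\<Sum>i=1..n. X i \<omega>) / real n) \<longlonglongrightarrow> \<mu>"
    unfolding \<mu>_def by (rule slln_bounded[OF P meas ind dist rng]) simp_all
  have S2: "AE \<omega> in M. (\<lambda>n. (\<Sum>i=1..n. Y i \<omega>) / real n) \<longlonglongrightarrow> expectation (Y 1)"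
  proof (rule slln_bounded[OF P, where a = 0 and b = "(1 + \<bar>\<mu>\<bar>)^2"])
    show "Y i \<in> borel_measurable M" if "i \<ge> 1" for i
      unfolding Y_def using meas[OF that] by measurable
    show "indep_vars (\<lambda>_. borel) Y {1..}"
      unfolding Y_def by (rule indep_vars_compose2[OF ind, where Y = "\<lambda>i x. (x - \<mu>)^2"]) measurable
    show "distr M borel (Y i) = distr M borel (Y 1)" if i: "i \<ge> 1" for i
    proof -
      have f: "(\<lambda>x::real. (x - \<mu>)^2) \<in> borel_measurable borel" by measurable
      have "distr M borel (Y i) = distr (distr M borel (X i)) borel (\<lambda>x. (x - \<mu>)^2)"
        using distr_distr[OF f meas[OF i]] by (simp add: Yf comp_def)
      also have "\<dots> = distr (distr M borel (X 1)) borel (\<lambda>x. (x - \<mu>)^2)" using dist[OF i] by simp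
      also have "\<dots> = distr M borel (Y 1)"
        using distr_distr[OF f meas[of 1]] by (simp add: Yf comp_def)
      finally show ?thesis .
    qed
    show "Y i \<omega> \<in> {0..(1 + \<bar>\<mu>\<bar>)^2}" if "i \<ge> 1" "\<omega> \<in> space M" for i \<omega>
    proof -
      have "\<bar>X i \<omega> - \<mu>\<bar> \<le> 1 + \<bar>\<mu>\<bar>" using rng[OF that] abs_triangle_ineq4[of "X i \<omega>" \<mu>] by auto
      then have "\<bar>X i \<omega> - \<mu>\<bar>^2 \<le> (1 + \<bar>\<mu>\<bar>)^2" by (intro power_mono) auto
      then show ?thesis by (simp add: Y_def)
    qed
    show "0 < (1 + \<bar>\<mu>\<bar>)^2" by (simp add: add_pos_nonneg)
  qed
  have EY: "expectation (Y 1) = \<sigma>2" using assms(6) by (simp add: Yf \<mu>_def)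
  show ?thesis
    using S1 S2 AE_space
  proof eventually_elim
    case (elim \<omega>)
    have r: "X i \<omega> \<in> {0..1}" if "i \<ge> 1" for i using rng[OF that elim(3)] .
    have l1: "(\<lambda>n. (\<Sum>i=1..n. X i \<omega>) / real n) \<longlonglongrightarrow> \<mu>" by (rule elim(1))
    have l2: "(\<lambda>n. (\<Sum>i=1..n. (X i \<omega> - \<mu>)^2) / real n) \<longlonglongrightarrow> \<sigma>2"
      using elim(2) unfolding EY Y_def .
    show ?case by (rule deterministic[where X = X and \<omega> = \<omega> and \<mu> = \<mu> and \<alpha> = \<alpha>, OF r l1 l2 assms(7) assms(8) assms(9)])
  qed
qed

end
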